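(* The sub-set-operad $\mathrm{RWS}_\odot$ of $\mathrm{RWS}$ generated by $A_\succ$, $A_\prec$ and $A_\odot$ consists exactly of the recursively labelled red and white trees in which every node has at most one label and which avoid the two patterns: (i) no node with a nonempty label set has a red child; (ii) no white node has two (or more) red children.
   Context: Red and white trees: $\mathrm{RW}(n)$ is the set of finite rooted trees (children unordered) whose nodes $z$ carry possibly empty label sets $L(z)\subseteq[n]$ partitioning $[n]$, each empty node having at least two children; labelled nodes are white, an empty node is red iff all its children are white (so an empty white node has a red child). Composition $T_1\circ_xT_2$ ($T_1\in\mathrm{RW}(m)$, $T_2\in\mathrm{RW}(n)$): relabel $T_1$ by $y\mapsto y+n-1$ for $y>x$ and $T_2$ by $y\mapsto y+x-1$; $z\ni x$ in $T_1$, $r$ = root of $T_2$. (W) $r$ not red: remove $x$ from $L(z)$, add $L(r)$ to $L(z)$, children of $r$ become children of $z$. (R1) $r$ red, $T_1$ the single node $\{x\}$: result $T_2$. (R2) $r$ red and ($z$ has a child or $|L(z)|\ge2$): remove $x$ from $L(z)$, attach $T_2$ as child subtree of $z$. (R3) $r$ red, $z$ non-root leaf with $L(z)=\{x\}$: delete $z$, children of $r$ become children of the parent of $z$. Colours recomputed. A tree is recursively labelled if for each node the union of label sets in its subtree is an interval of integers. $\mathrm{RWS}$ is the sub-set-operad generated by $A_\mu$ (single node $\{1,2\}$), $A_\prec$ (root $\{1\}$ with child $\{2\}$), $A_\succ$ (root $\{2\}$ with child $\{1\}$), $A_\odot$ (empty red root with children $\{1\},\{2\}$). *)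

theory Defs
  imports Main "HOL-Library.Multiset"
begin

datatype rwt = Node (lab: "nat set") (kids: "rwt multiset")

primrec red :: "rwt \<Rightarrow> bool" where
  "red (Node L K) = (L = {} \<and> True \<notin># image_mset red K)"

definition white :: "rwt \<Rightarrow> bool" where
  "white t = (\<not> red t)"

primrec wf_rw :: "rwt \<Rightarrow> bool" where
  "wf_rw (Node L K) = (finite L \<and> (L = {} \<longrightarrow> size K \<ge> 2) \<and> False \<notin># image_mset wf_rw K)"

primrec labs :: "rwt \<Rightarrow> nat multiset" where
  "labs (Node L K) = mset_set L + sum_mset (image_mset labs K)"

primrec alllabs :: "rwt \<Rightarrow> nat set" where
  "alllabs (Node L K) = L \<union> \<Union> (set_mset (image_mset alllabs K))"

text \<open>RW(n): label sets partition [n] = {1..n}.\<close>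
definition RW :: "nat \<Rightarrow> rwt \<Rightarrow> bool" where
  "RW n t = (wf_rw t \<and> labs t = mset_set {1..n})"

primrec subtrees :: "rwt \<Rightarrow> rwt set" where
  "subtrees (Node L K) = insert (Node L K) (\<Union> (set_mset (image_mset subtrees K)))"

definition is_int_interval :: "nat set \<Rightarrow> bool" where
  "is_int_interval S = (\<exists>a b. S = {a..b})"

definition rec_labelled :: "rwt \<Rightarrow> bool" where
  "rec_labelled t = (\<forall>s \<in> subtrees t. is_int_interval (alllabs s))"

primrec relab :: "(nat \<Rightarrow> nat) \<Rightarrow> rwt \<Rightarrow> rwt" where
  "relab f (Node L K) = Node (f ` L) (image_mset (relab f) K)"

text \<open>Case (W): the node z containing x absorbs the root r of T2.\<close>
primrec graftW :: "nat \<Rightarrow> rwt \<Rightarrow> rwt \<Rightarrow> rwt" where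
  "graftW x R (Node L K) =
     (if x \<in> L then Node ((L - {x}) \<union> lab R) (K + kids R)
      else Node L (image_mset (graftW x R) K))"

text \<open>Cases (R2)/(R3) for a red root r of T2 (applied to a tree whose root is
not the single leaf {x}): a non-root leaf {x} is deleted and replaced by the
children of r (R3); otherwise x is removed from L(z) and T2 is attached as a
child of z (R2).\<close>
primrec graftR :: "nat \<Rightarrow> rwt \<Rightarrow> rwt \<Rightarrow> rwt" where
  "graftR x R (Node L K) =
     (if x \<in> L then Node (L - {x}) (K + {#R#})
      else Node L (sum_mset (image_mset
             (\<lambda>c. if c = Node {x} {#} then kids R else {#graftR x R c#}) K)))"

definition comp :: "rwt \<Rightarrow> nat \<Rightarrow> rwt \<Rightarrow> nat \<Rightarrow> rwt" where
  "comp T1 x T2 n =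
     (let T1' = relab (\<lambda>y. if y > x then y + n - 1 else y) T1;
          T2' = relab (\<lambda>y. y + x - 1) T2
      in if \<not> red T2' then graftW x T2' T1'
         else if T1' = Node {x} {#} then T2'
         else graftR x T2' T1')"

definition A_mu :: rwt where "A_mu = Node {1,2} {#}"
definition A_prec :: rwt where "A_prec = Node {1} {#Node {2} {#}#}"
definition A_succ :: rwt where "A_succ = Node {2} {#Node {1} {#}#}"
definition A_odot :: rwt where "A_odot = Node {} {#Node {1} {#}, Node {2} {#}#}"

inductive RWSodot :: "nat \<Rightarrow> rwt \<Rightarrow> bool" where
  unit: "RWSodot 1 (Node {1} {#})"
| gen_succ: "RWSodot 2 A_succ"
| gen_prec: "RWSodot 2 A_prec"
| gen_odot: "RWSodot 2 A_odot"
| compose: "RWSodot m T1 \<Longrightarrow> RWSodot n T2 \<Longrightarrow> 1 \<le> x \<Longrightarrow> x \<le> m \<Longrightarrow>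
            RWSodot (m + n - 1) (comp T1 x T2 n)"

end

theory Submission
  imports Defs
begin


primrec shp :: "rwt \<Rightarrow> bool" where
 "shp (Node L K) = (finite L \<and> card L \<le> 1 \<and> (L = {} \<longrightarrow> 2 \<le> size K) \<and>
    (L \<noteq> {} \<longrightarrow> (\<forall>c\<in>#K. \<not> red c)) \<and>
    (\<not> red (Node L K) \<longrightarrow> size (filter_mset red K) \<le> 1) \<and> False \<notin># image_mset shp K)"

primrec ivl :: "(nat set \<Rightarrow> bool) \<Rightarrow> rwt \<Rightarrow> bool" where
 "ivl P (Node L K) = (P (alllabs (Node L K)) \<and> False \<notin># image_mset (ivl P) K)"

primrec sz :: "rwt \<Rightarrow> nat" where
 "sz (Node L K) = Suc (sum_mset (image_mset sz K))"

definition dl :: "rwt \<Rightarrow> bool" where "dl t \<longleftrightarrow> labs t = mset_set (alllabs t)"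

lemma shp_Node: "shp (Node L K) = (finite L \<and> card L \<le> 1 \<and> (L = {} \<longrightarrow> 2 \<le> size K) \<and>
    (L \<noteq> {} \<longrightarrow> (\<forall>c\<in>#K. \<not> red c)) \<and>
    (\<not> red (Node L K) \<longrightarrow> size (filter_mset red K) \<le> 1) \<and> (\<forall>c\<in>#K. shp c))"
  by auto

lemma ivl_Node: "ivl P (Node L K) = (P (alllabs (Node L K)) \<and> (\<forall>c\<in>#K. ivl P c))"
  by auto

lemma red_Node: "red (Node L K) = (L = {} \<and> (\<forall>c\<in>#K. \<not> red c))"
  by auto

lemma alllabs_Node: "alllabs (Node L K) = L \<union> (\<Union>c\<in>set_mset K. alllabs c)"
  by auto

declare shp.simps[simp del] ivl.simps[simp del]
declare shp_Node[simp] ivl_Node[simp]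

lemma sz_child: "c \<in># K \<Longrightarrow> sz c < sz (Node L K)"
proof -
  assume "c \<in># K"
  then obtain K' where "K = add_mset c K'" by (metis mset_add)
  then show ?thesis by simp
qed

lemma set_labs: "shp t \<Longrightarrow> set_mset (labs t) = alllabs t"
  by (induction t) auto

lemma finite_alllabs: "shp t \<Longrightarrow> finite (alllabs t)"
  by (induction t) auto

lemma alllabs_ne: "shp t \<Longrightarrow> alllabs t \<noteq> {}"
proof (induction t)
  case (Node L K)
  show ?case
  proof (cases "L = {}")
    case True
    with Node.prems have "K \<noteq> {#}" by auto
    then obtain c where c: "c \<in># K" by blast
    with Node show ?thesis by auto
  qed auto
qed

lemma alllabs_relab: "alllabs (relab f t) = f ` alllabs t"
  by (induction t) (auto simp: image_Union)

lemma red_relab: "red (relab f t) = red t"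
  by (induction t) auto

lemma sz_relab: "sz (relab f t) = sz t"
proof (induction t)
  case (Node L K)
  have "image_mset (sz \<circ> relab f) K = image_mset sz K"
    by (rule image_mset_cong) (use Node in auto)
  then show ?case by (simp add: image_mset.compositionality)
qed

lemma shp_relab: "shp t \<Longrightarrow> shp (relab f t)"
proof (induction t)
  case (Node L K)
  have "size (filter_mset red (image_mset (relab f) K)) = size (filter_mset red K)"
    by (simp add: filter_mset_image_mset red_relab)
  moreover have "card (f ` L) \<le> 1" using Node.prems card_image_le[of L f] by auto
  ultimately show ?case using Node by (auto simp: red_relab)
qed

lemma relab_relab: "relab f (relab g t) = relab (f \<circ> g) t"
  by (induction t) (auto simp: image_image multiset.map_comp intro!: image_mset_cong)

lemma relab_id: "(\<And>y. y \<in> alllabs t \<Longrightarrow> f y = y) \<Longrightarrow> relab f t = t"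
proof (induction t)
  case (Node L K)
  have "image_mset (relab f) K = image_mset id K"
  proof (rule image_mset_cong)
    fix c assume c: "c \<in># K"
    have "\<And>y. y \<in> alllabs c \<Longrightarrow> f y = y" using c Node.prems by auto
    then show "relab f c = id c" using Node.IH[OF c] by simp
  qed
  moreover have "f ` L = L"
  proof -
    have "\<forall>y\<in>L. f y = y" using Node.prems by auto
    then show ?thesis by force
  qed
  ultimately show ?case by simp
qed

lemma ivl_relab: "ivl P t \<Longrightarrow> (\<And>S. P S \<Longrightarrow> S \<subseteq> alllabs t \<Longrightarrow> Q (f ` S)) \<Longrightarrow> ivl Q (relab f t)"
proof (induction t)
  case (Node L K)
  have "Q (alllabs (relab f (Node L K)))"
    unfolding alllabs_relab using Node.prems by auto
  moreover have "ivl Q (relab f c)" if c: "c \<in># K" for c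
  proof (rule Node.IH[OF c])
    show "ivl P c" using Node.prems(1) c by simp
    fix S assume "P S" "S \<subseteq> alllabs c"
    moreover have "alllabs c \<subseteq> alllabs (Node L K)" using c by auto
    ultimately show "Q (f ` S)" using Node.prems(2) by blast
  qed
  ultimately show ?case by (simp del: alllabs_Node)
qed

lemma image_sum_mset: "image_mset f (sum_mset M) = sum_mset (image_mset (image_mset f) M)"
  by (induction M) auto

lemma labs_relab: "shp t \<Longrightarrow> inj_on f (alllabs t) \<Longrightarrow> labs (relab f t) = image_mset f (labs t)"
proof (induction t)
  case (Node L K)
  have "image_mset (labs \<circ> relab f) K = image_mset (image_mset f \<circ> labs) K"
  proof (rule image_mset_cong)
    fix c assume c: "c \<in># K"
    have "inj_on f (alllabs c)" using c Node.prems(2) by (auto intro: inj_on_subset)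
    moreover have "shp c" using c Node.prems(1) by simp
    ultimately show "(labs \<circ> relab f) c = (image_mset f \<circ> labs) c" using Node.IH[OF c] by simp
  qed
  moreover have "mset_set (f ` L) = image_mset f (mset_set L)"
    by (rule image_mset_mset_set[symmetric], rule inj_on_subset[OF Node.prems(2)]) auto
  ultimately show ?case
    by (simp add: image_sum_mset multiset.map_comp[symmetric])
qed

lemma dl_relab: "shp t \<Longrightarrow> dl t \<Longrightarrow> inj_on f (alllabs t) \<Longrightarrow> dl (relab f t)"
  unfolding dl_def by (simp add: labs_relab alllabs_relab image_mset_mset_set)



lemma dl_count:
  assumes s: "shp t"
  shows "dl t \<longleftrightarrow> (\<forall>y. count (labs t) y \<le> 1)"
proof
  show "dl t \<Longrightarrow> \<forall>y. count (labs t) y \<le> 1"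
    unfolding dl_def using finite_alllabs[OF s] by (simp add: count_mset_set')
next
  assume c: "\<forall>y. count (labs t) y \<le> 1"
  show "dl t" unfolding dl_def
  proof (rule multiset_eqI)
    fix y
    have e: "y \<in> alllabs t \<longleftrightarrow> 0 < count (labs t) y" using set_labs[OF s] by auto
    have le: "count (labs t) y \<le> 1" using c by blast
    show "count (labs t) y = count (mset_set (alllabs t)) y"
    proof (cases "y \<in> alllabs t")
      case True
      then have "0 < count (labs t) y" using e by blast
      moreover have "count (mset_set (alllabs t)) y = 1" using True finite_alllabs[OF s] by simp
      ultimately show ?thesis using le by linarith
    next
      case False
      then have "\<not> 0 < count (labs t) y" using e by blast
      then have "count (labs t) y = 0" by linarith
      moreover have "count (mset_set (alllabs t)) y = 0" using False by simp
      ultimately show ?thesis by linarith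
    qed
  qed
qed

lemma labs_split: "c \<in># K \<Longrightarrow> labs (Node L K) = mset_set L + labs c + sum_mset (image_mset labs (K - {#c#}))"
proof -
  assume "c \<in># K"
  then have "K = add_mset c (K - {#c#})" by simp
  then have "labs (Node L K) = labs (Node L (add_mset c (K - {#c#})))" by simp
  also have "\<dots> = mset_set L + labs c + sum_mset (image_mset labs (K - {#c#}))" by (simp add: add_ac)
  finally show ?thesis .
qed

lemma dl_child: "shp (Node L K) \<Longrightarrow> dl (Node L K) \<Longrightarrow> c \<in># K \<Longrightarrow> dl c"
proof -
  assume s: "shp (Node L K)" and d: "dl (Node L K)" and c: "c \<in># K"
  have "shp c" using s c by simp
  moreover have "count (labs c) y \<le> 1" for y
  proof -
    have "count (labs c) y \<le> count (labs (Node L K)) y"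
      using labs_split[OF c, of L] by simp
    then show ?thesis using d s dl_count by (meson le_trans)
  qed
  ultimately show ?thesis using dl_count by blast
qed

lemma dl_disj:
  assumes s: "shp (Node L K)" and d: "dl (Node L K)" and c: "c \<in># K"
  shows "L \<inter> alllabs c = {}" "\<And>e. e \<in># K - {#c#} \<Longrightarrow> alllabs c \<inter> alllabs e = {}"
proof -
  have sc: "shp c" using s c by simp
  have cnt: "count (labs (Node L K)) y \<le> 1" for y using d s dl_count by blast
  have fL: "finite L" using s by simp
  show "L \<inter> alllabs c = {}"
  proof (rule ccontr)
    assume "L \<inter> alllabs c \<noteq> {}"
    then obtain y where y: "y \<in> L" "y \<in> alllabs c" by blast
    then have "y \<in># labs c" using set_labs[OF sc] by simp
    then have "count (labs c) y \<ge> 1" by (simp add: Suc_le_eq)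
    moreover have "count (mset_set L) y = 1" using y fL by (simp add: count_mset_set')
    moreover have "count (labs (Node L K)) y = count (mset_set L) y + count (labs c) y
       + count (sum_mset (image_mset labs (K - {#c#}))) y"
      using labs_split[OF c, of L] by (simp del: labs.simps)
    ultimately show False using cnt[of y] by linarith
  qed
  fix e assume e: "e \<in># K - {#c#}"
  have se: "shp e" using s e by (meson in_diffD shp_Node)
  show "alllabs c \<inter> alllabs e = {}"
  proof (rule ccontr)
    assume "alllabs c \<inter> alllabs e \<noteq> {}"
    then obtain y where y: "y \<in> alllabs c" "y \<in> alllabs e" by blast
    then have "y \<in># labs c" "y \<in># labs e" using set_labs[OF sc] set_labs[OF se] by auto
    then have "count (labs c) y \<ge> 1" "count (labs e) y \<ge> 1" by (auto simp: Suc_le_eq)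
    moreover have "count (sum_mset (image_mset labs (K - {#c#}))) y \<ge> count (labs e) y"
    proof -
      have "sum_mset (image_mset labs (K - {#c#})) = labs e + sum_mset (image_mset labs (K - {#c#} - {#e#}))"
        using labs_split[OF e, of "{}"] by simp
      then show ?thesis by simp
    qed
    moreover have "count (labs (Node L K)) y = count (mset_set L) y + count (labs c) y
       + count (sum_mset (image_mset labs (K - {#c#}))) y"
      using labs_split[OF c, of L] by (simp del: labs.simps)
    ultimately show False using cnt[of y] by linarith
  qed
qed

lemma uniq_child:
  assumes s: "shp (Node L K)" and d: "dl (Node L K)" and xL: "x \<notin> L" and x: "x \<in> alllabs (Node L K)"
  obtains c0 K' where "K = add_mset c0 K'" "x \<in> alllabs c0" "\<And>c. c \<in># K' \<Longrightarrow> x \<notin> alllabs c"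
proof -
  obtain c0 where c0: "c0 \<in># K" "x \<in> alllabs c0" using x xL by auto
  show ?thesis
  proof
    show "K = add_mset c0 (K - {#c0#})" using c0 by simp
    show "x \<in> alllabs c0" by fact
    fix c assume "c \<in># K - {#c0#}"
    then show "x \<notin> alllabs c" using dl_disj(2)[OF s d c0(1)] c0(2) by blast
  qed
qed

lemma ivl_mono: "ivl P t \<Longrightarrow> (\<And>S. P S \<Longrightarrow> S \<subseteq> alllabs t \<Longrightarrow> Q S) \<Longrightarrow> ivl Q t"
proof (induction t)
  case (Node L K)
  have "ivl Q c" if c: "c \<in># K" for c
  proof (rule Node.IH[OF c])
    show "ivl P c" using Node.prems(1) c by simp
    fix S assume "P S" "S \<subseteq> alllabs c"
    moreover have "alllabs c \<subseteq> alllabs (Node L K)" using c by auto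
    ultimately show "Q S" using Node.prems(2) by blast
  qed
  then show ?case using Node.prems by (simp del: alllabs_Node)
qed

lemma graftW_id: "x \<notin> alllabs t \<Longrightarrow> graftW x R t = t"
proof (induction t)
  case (Node L K)
  have "image_mset (graftW x R) K = image_mset id K"
    by (rule image_mset_cong) (use Node in auto)
  then show ?case using Node.prems by simp
qed

lemma sum_single: "sum_mset (image_mset (\<lambda>c. {#g c#}) K) = image_mset g K"
  by (induction K) auto

lemma graftR_id: "x \<notin> alllabs t \<Longrightarrow> graftR x R t = t"
proof (induction t)
  case (Node L K)
  have "image_mset (\<lambda>c. if c = Node {x} {#} then kids R else {#graftR x R c#}) K
     = image_mset (\<lambda>c. {#id c#}) K"
    by (rule image_mset_cong) (use Node in auto)
  then show ?case using Node.prems by (simp add: sum_single)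
qed



definition gp :: "nat \<Rightarrow> nat set \<Rightarrow> nat set \<Rightarrow> bool" where
  "gp x J S = (if x \<in> S then is_int_interval (S \<union> J) else is_int_interval S)"

lemma single_lab: "finite L \<Longrightarrow> card L \<le> 1 \<Longrightarrow> x \<in> L \<Longrightarrow> L = {x}"
  using card_le_Suc0_iff_eq by fastforce

lemma ivl_gp_nox: "ivl (gp x J) c \<Longrightarrow> x \<notin> alllabs c \<Longrightarrow> ivl is_int_interval c"
  by (rule ivl_mono[of "gp x J"]) (auto simp: gp_def split: if_splits)

lemma graftW_props:
  assumes "shp t" "ivl (gp x J) t" "dl t" "x \<in> alllabs t"
    and R: "shp R" "ivl is_int_interval R" "\<not> red R" "alllabs R = J"
    and "alllabs t \<inter> J = {x}"
  shows "shp (graftW x R t) \<and> ivl is_int_interval (graftW x R t) \<and> red (graftW x R t) = red t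
     \<and> alllabs (graftW x R t) = alllabs t \<union> J \<and> labs (graftW x R t) + {#x#} = labs t + labs R"
  using assms
proof (induction t)
  case (Node L K)
  have xJ: "x \<in> J" using Node.prems(9) by auto
  have sK: "\<And>c. c \<in># K \<Longrightarrow> shp c" using Node.prems(1) by simp
  have iK: "\<And>c. c \<in># K \<Longrightarrow> ivl (gp x J) c" using Node.prems(2) by simp
  have fL: "finite L" "card L \<le> 1" using Node.prems(1) by simp_all
  have rootgp: "is_int_interval (alllabs (Node L K) \<union> J)"
    using Node.prems(2,4) by (simp add: gp_def del: alllabs_Node)
  show ?case
  proof (cases "x \<in> L")
    case True
    have L: "L = {x}" using single_lab[OF fL True] .
    define LR where "LR = lab R"
    define KR where "KR = kids R"
    have Rd: "R = Node LR KR" unfolding LR_def KR_def by (rule rwt.collapse[symmetric])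
    have res: "graftW x R (Node L K) = Node LR (K + KR)" using True L Rd by simp
    have noxK: "\<And>c. c \<in># K \<Longrightarrow> x \<notin> alllabs c" using dl_disj(1)[OF Node.prems(1,3)] True by blast
    have whK: "\<And>c. c \<in># K \<Longrightarrow> \<not> red c" using Node.prems(1) L by simp
    have sR: "finite LR" "card LR \<le> 1" "LR = {} \<longrightarrow> 2 \<le> size KR" "LR \<noteq> {} \<longrightarrow> (\<forall>c\<in>#KR. \<not> red c)"
      "size (filter_mset red KR) \<le> 1" "\<And>c. c \<in># KR \<Longrightarrow> shp c"
      using R(1,3) Rd by auto
    have nr: "\<not> red (Node LR (K + KR))" using R(3) Rd by auto
    have fK: "filter_mset red K = {#}" using whK by (simp add: filter_mset_eq_conv)
    have shp_res: "shp (Node LR (K + KR))"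
    proof -
      have eq: "filter_mset red (K + KR) = filter_mset red KR" by (simp only: filter_union_mset fK) simp
      have a: "size (filter_mset red (K + KR)) \<le> 1" using sR(5) by (simp only: eq)
      have b: "\<forall>c\<in>#K+KR. shp c" using sK sR(6) by auto
      have c: "LR \<noteq> {} \<longrightarrow> (\<forall>c\<in>#K+KR. \<not> red c)" using whK sR(4) by auto
      have d: "LR = {} \<longrightarrow> 2 \<le> size (K+KR)" using sR(3) by auto
      show ?thesis unfolding shp_Node using a b c d sR(1,2) by blast
    qed
    have all_res: "alllabs (Node LR (K + KR)) = alllabs (Node L K) \<union> J"
      using R(4) Rd L xJ by auto
    have ivl_res: "ivl is_int_interval (Node LR (K + KR))"
    proof -
      have "is_int_interval (alllabs (Node LR (K + KR)))" using all_res rootgp by simp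
      moreover have "ivl is_int_interval c" if "c \<in># K + KR" for c
      proof (cases "c \<in># K")
        case True then show ?thesis using ivl_gp_nox iK noxK by blast
      next
        case False then have "c \<in># KR" using that by simp
        then show ?thesis using R(2) Rd by simp
      qed
      ultimately show ?thesis by (simp del: alllabs_Node)
    qed
    have labs_res: "labs (Node LR (K + KR)) + {#x#} = labs (Node L K) + labs R"
      using L Rd by simp
    have rL: "\<not> red (Node L K)" using L by simp
    have rr: "red (Node LR (K + KR)) = red (Node L K)" using nr rL by blast
    show ?thesis unfolding res using shp_res ivl_res all_res labs_res rr by blast
  next
    case False
    obtain c0 K' where K: "K = add_mset c0 K'" and xc0: "x \<in> alllabs c0"
      and noxK': "\<And>c. c \<in># K' \<Longrightarrow> x \<notin> alllabs c"
      using uniq_child[OF Node.prems(1,3) False Node.prems(4)] by blast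
    have c0K: "c0 \<in># K" using K by simp
    have IH: "shp (graftW x R c0) \<and> ivl is_int_interval (graftW x R c0) \<and> red (graftW x R c0) = red c0
     \<and> alllabs (graftW x R c0) = alllabs c0 \<union> J \<and> labs (graftW x R c0) + {#x#} = labs c0 + labs R"
    proof (rule Node.IH[OF c0K])
      show "shp c0" using sK c0K by blast
      show "ivl (gp x J) c0" using iK c0K by blast
      show "dl c0" using dl_child[OF Node.prems(1,3) c0K] .
      show "x \<in> alllabs c0" by fact
      show "alllabs c0 \<inter> J = {x}" using Node.prems(9) c0K xc0 by auto
    qed (use R in auto)
    have idK': "image_mset (graftW x R) K' = K'"
    proof -
      have "image_mset (graftW x R) K' = image_mset id K'"
        by (rule image_mset_cong) (use noxK' graftW_id in auto)
      then show ?thesis by simp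
    qed
    define g0 where "g0 = graftW x R c0"
    have res: "graftW x R (Node L K) = Node L (add_mset g0 K')"
      using False K idK' g0_def by simp
    have IH': "shp g0" "ivl is_int_interval g0" "red g0 = red c0" "alllabs g0 = alllabs c0 \<union> J"
      "labs g0 + {#x#} = labs c0 + labs R" using IH g0_def by auto
    have sK': "\<And>c. c \<in># K' \<Longrightarrow> shp c" using sK K by simp
    have shp_res: "shp (Node L (add_mset g0 K'))"
      using Node.prems(1) IH'(1,3) sK' unfolding K by (auto split: if_splits)
    have red_res: "red (Node L (add_mset g0 K')) = red (Node L K)"
      using IH'(3) K by simp
    have all_res: "alllabs (Node L (add_mset g0 K')) = alllabs (Node L K) \<union> J"
      using IH'(4) K by auto
    have ivl_res: "ivl is_int_interval (Node L (add_mset g0 K'))"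
    proof -
      have "is_int_interval (alllabs (Node L (add_mset g0 K')))" using all_res rootgp by simp
      moreover have "ivl is_int_interval c" if "c \<in># K'" for c
        using ivl_gp_nox[OF iK noxK'[OF that]] that K by simp
      ultimately show ?thesis using IH'(2) by (simp del: alllabs_Node)
    qed
    have labs_res: "labs (Node L (add_mset g0 K')) + {#x#} = labs (Node L K) + labs R"
      using IH'(5) K by (simp add: add_ac)
    show ?thesis unfolding res using shp_res red_res all_res ivl_res labs_res by blast
  qed
qed

lemma graftR_props:
  assumes "shp t" "ivl (gp x J) t" "dl t" "x \<in> alllabs t" "t \<noteq> Node {x} {#}"
    and R: "shp R" "ivl is_int_interval R" "red R" "alllabs R = J"
    and "alllabs t \<inter> J = {x}"
  shows "shp (graftR x R t) \<and> ivl is_int_interval (graftR x R t) \<and> red (graftR x R t) = red t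
     \<and> alllabs (graftR x R t) = alllabs t \<union> J \<and> labs (graftR x R t) + {#x#} = labs t + labs R"
  using assms
proof (induction t)
  case (Node L K)
  have xJ: "x \<in> J" using Node.prems(10) by auto
  have sK: "\<And>c. c \<in># K \<Longrightarrow> shp c" using Node.prems(1) by simp
  have iK: "\<And>c. c \<in># K \<Longrightarrow> ivl (gp x J) c" using Node.prems(2) by simp
  have fL: "finite L" "card L \<le> 1" using Node.prems(1) by simp_all
  have rootgp: "is_int_interval (alllabs (Node L K) \<union> J)"
    using Node.prems(2,4) by (simp add: gp_def del: alllabs_Node)
  define LR where "LR = lab R"
  define KR where "KR = kids R"
  have Rd: "R = Node LR KR" unfolding LR_def KR_def by (rule rwt.collapse[symmetric])
  have LR: "LR = {}" and whKR: "\<And>c. c \<in># KR \<Longrightarrow> \<not> red c" using R(3) Rd by auto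
  have sKR: "\<And>c. c \<in># KR \<Longrightarrow> shp c" and szKR: "2 \<le> size KR" using R(1) Rd LR by auto
  have iKR: "\<And>c. c \<in># KR \<Longrightarrow> ivl is_int_interval c" using R(2) Rd by simp
  have JKR: "J = (\<Union>c\<in>set_mset KR. alllabs c)" using R(4) Rd LR by (auto simp: alllabs_Node)
  have labsR: "labs R = sum_mset (image_mset labs KR)" using Rd LR by simp
  have fKR: "filter_mset red KR = {#}" using whKR by (simp add: filter_mset_eq_conv)
  show ?case
  proof (cases "x \<in> L")
    case True
    have L: "L = {x}" using single_lab[OF fL True] .
    have Kne: "K \<noteq> {#}" using Node.prems(5) L by auto
    have res: "graftR x R (Node L K) = Node {} (K + {#R#})" using True L by simp
    have noxK: "\<And>c. c \<in># K \<Longrightarrow> x \<notin> alllabs c" using dl_disj(1)[OF Node.prems(1,3)] True by blast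
    have whK: "\<And>c. c \<in># K \<Longrightarrow> \<not> red c" using Node.prems(1) L by simp
    have fK: "filter_mset red K = {#}" using whK by (simp add: filter_mset_eq_conv)
    have nr: "\<not> red (Node {} (K + {#R#}))" using R(3) by simp
    have shp_res: "shp (Node {} (K + {#R#}))"
    proof -
      have eq: "filter_mset red (K + {#R#}) = {#R#}" using R(3) by (simp only: filter_union_mset fK) simp
      have a: "size (filter_mset red (K + {#R#})) \<le> 1" by (simp only: eq) simp
      have b: "\<forall>c\<in>#K+{#R#}. shp c" using sK R(1) by auto
      have d: "2 \<le> size (K + {#R#})" using Kne by (cases K) auto
      show ?thesis unfolding shp_Node using a b d by simp
    qed
    have all_res: "alllabs (Node {} (K + {#R#})) = alllabs (Node L K) \<union> J"
      using R(4) L xJ by (auto simp: alllabs_Node)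
    have ivl_res: "ivl is_int_interval (Node {} (K + {#R#}))"
    proof -
      have "is_int_interval (alllabs (Node {} (K + {#R#})))" using all_res rootgp by simp
      moreover have "ivl is_int_interval c" if "c \<in># K + {#R#}" for c
      proof (cases "c \<in># K")
        case True then show ?thesis using ivl_gp_nox iK noxK by blast
      next
        case False then have "c = R" using that by simp
        then show ?thesis using R(2) by simp
      qed
      ultimately show ?thesis by (simp only: ivl_Node) blast
    qed
    have labs_res: "labs (Node {} (K + {#R#})) + {#x#} = labs (Node L K) + labs R"
      using L by (simp add: add_ac)
    have rL: "\<not> red (Node L K)" using L by simp
    have rr: "red (Node {} (K + {#R#})) = red (Node L K)" using nr rL by blast
    show ?thesis unfolding res using shp_res ivl_res all_res labs_res rr by blast
  next
    case False
    obtain c0 K' where K: "K = add_mset c0 K'" and xc0: "x \<in> alllabs c0"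
      and noxK': "\<And>c. c \<in># K' \<Longrightarrow> x \<notin> alllabs c"
      using uniq_child[OF Node.prems(1,3) False Node.prems(4)] by blast
    have c0K: "c0 \<in># K" using K by simp
    define h where "h = (\<lambda>c. if c = Node {x} {#} then kids R else {#graftR x R c#})"
    have hK': "sum_mset (image_mset h K') = K'"
    proof -
      have "image_mset h K' = image_mset (\<lambda>c. {#id c#}) K'"
      proof (rule image_mset_cong)
        fix c assume c: "c \<in># K'"
        have nx: "x \<notin> alllabs c" using noxK'[OF c] .
        then have "c \<noteq> Node {x} {#}" by auto
        then show "h c = {#id c#}" using graftR_id[OF nx] unfolding h_def by simp
      qed
      then show ?thesis by (simp add: sum_single)
    qed
    have res0: "graftR x R (Node L K) = Node L (h c0 + K')"
      using False K hK' unfolding h_def by simp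
    have sK': "\<And>c. c \<in># K' \<Longrightarrow> shp c" using sK K by simp
    have ivK': "\<And>c. c \<in># K' \<Longrightarrow> ivl is_int_interval c"
      using ivl_gp_nox[OF iK noxK'] K by simp
    have sc0: "shp c0" using sK c0K by blast
    show ?thesis
    proof (cases "c0 = Node {x} {#}")
      case True
      have res: "graftR x R (Node L K) = Node L (KR + K')" using res0 True unfolding h_def KR_def by simp
      have shp_res: "shp (Node L (KR + K'))"
      proof -
        have eq: "filter_mset red (KR + K') = filter_mset red K" using K True fKR
          by (simp only: filter_union_mset fKR) simp
        have a: "\<not> red (Node L K) \<longrightarrow> size (filter_mset red (KR + K')) \<le> 1"
          using Node.prems(1) by (simp only: eq) simp
        have b: "\<forall>c\<in>#KR+K'. shp c" using sKR sK' by auto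
        have c: "L \<noteq> {} \<longrightarrow> (\<forall>c\<in>#KR+K'. \<not> red c)" using whKR Node.prems(1) K by auto
        have d: "L = {} \<longrightarrow> 2 \<le> size (KR+K')" using szKR by auto
        have rr: "red (Node L (KR + K')) = red (Node L K)" using whKR K True by auto
        show ?thesis unfolding shp_Node using a b c d fL rr by simp
      qed
      have rr: "red (Node L (KR + K')) = red (Node L K)" using whKR K True by auto
      have all_res: "alllabs (Node L (KR + K')) = alllabs (Node L K) \<union> J"
        using JKR K True xJ by (auto simp: alllabs_Node)
      have ivl_res: "ivl is_int_interval (Node L (KR + K'))"
      proof -
        have "is_int_interval (alllabs (Node L (KR + K')))" using all_res rootgp by simp
        then show ?thesis using iKR ivK' by auto
      qed
      have labs_res: "labs (Node L (KR + K')) + {#x#} = labs (Node L K) + labs R"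
        using K True labsR by (simp add: add_ac)
      show ?thesis unfolding res using shp_res ivl_res all_res labs_res rr by blast
    next
      case nleaf: False
      have IH: "shp (graftR x R c0) \<and> ivl is_int_interval (graftR x R c0) \<and> red (graftR x R c0) = red c0
       \<and> alllabs (graftR x R c0) = alllabs c0 \<union> J \<and> labs (graftR x R c0) + {#x#} = labs c0 + labs R"
      proof (rule Node.IH[OF c0K])
        show "shp c0" using sK c0K by blast
        show "ivl (gp x J) c0" using iK c0K by blast
        show "dl c0" using dl_child[OF Node.prems(1,3) c0K] .
        show "x \<in> alllabs c0" by fact
        show "c0 \<noteq> Node {x} {#}" by fact
        show "alllabs c0 \<inter> J = {x}" using Node.prems(10) c0K xc0 by auto
      qed (use R in auto)
      define g0 where "g0 = graftR x R c0"
      have res: "graftR x R (Node L K) = Node L (add_mset g0 K')"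
        using res0 nleaf unfolding h_def g0_def by simp
      have IH': "shp g0" "ivl is_int_interval g0" "red g0 = red c0" "alllabs g0 = alllabs c0 \<union> J"
        "labs g0 + {#x#} = labs c0 + labs R" using IH g0_def by auto
      have shp_res: "shp (Node L (add_mset g0 K'))"
        using Node.prems(1) IH'(1,3) sK' unfolding K by (auto split: if_splits)
      have red_res: "red (Node L (add_mset g0 K')) = red (Node L K)"
        using IH'(3) K by simp
      have all_res: "alllabs (Node L (add_mset g0 K')) = alllabs (Node L K) \<union> J"
        using IH'(4) K by (auto simp: alllabs_Node)
      have ivl_res: "ivl is_int_interval (Node L (add_mset g0 K'))"
      proof -
        have "is_int_interval (alllabs (Node L (add_mset g0 K')))" using all_res rootgp by simp
        then show ?thesis using IH'(2) ivK' by simp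
      qed
      have labs_res: "labs (Node L (add_mset g0 K')) + {#x#} = labs (Node L K) + labs R"
        using IH'(5) K by (simp add: add_ac)
      show ?thesis unfolding res using shp_res red_res all_res ivl_res labs_res by blast
    qed
  qed
qed



lemma int_shift: "is_int_interval S \<Longrightarrow> is_int_interval ((\<lambda>y. y + k) ` S)"
proof -
  assume "is_int_interval S"
  then obtain a b where S: "S = {a..b}" unfolding is_int_interval_def by blast
  have "(\<lambda>y. y + k) ` {a..b} = {a+k..b+k}"
  proof
    show "(\<lambda>y. y + k) ` {a..b} \<subseteq> {a+k..b+k}" by auto
    show "{a+k..b+k} \<subseteq> (\<lambda>y. y + k) ` {a..b}"
    proof
      fix y assume "y \<in> {a+k..b+k}"
      then have "y - k \<in> {a..b}" "y = (y - k) + k" by auto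
      then show "y \<in> (\<lambda>y. y + k) ` {a..b}" by blast
    qed
  qed
  then show ?thesis unfolding S is_int_interval_def by blast
qed

lemma gap_fwd:
  assumes S: "is_int_interval S" and n: "1 \<le> n"
  shows "gp x {x..x+n-1} ((\<lambda>y. if x < y then y + n - 1 else y) ` S)"
proof -
  define f where "f = (\<lambda>y::nat. if x < y then y + n - 1 else y)"
  obtain a b where Sab: "S = {a..b}" using S unfolding is_int_interval_def by blast
  have fx: "\<And>y. f y = x \<longleftrightarrow> y = x" unfolding f_def using n by auto
  have xin: "x \<in> f ` S \<longleftrightarrow> x \<in> S" using fx by force
  show ?thesis
  proof (cases "x \<in> S")
    case True
    then have ab: "a \<le> x" "x \<le> b" using Sab by auto
    have "f ` S \<union> {x..x+n-1} = {a..b+n-1}"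
    proof
      show "f ` S \<union> {x..x+n-1} \<subseteq> {a..b+n-1}" using ab n unfolding Sab f_def by auto
      show "{a..b+n-1} \<subseteq> f ` S \<union> {x..x+n-1}"
      proof
        fix y assume y: "y \<in> {a..b+n-1}"
        show "y \<in> f ` S \<union> {x..x+n-1}"
        proof (cases "y \<le> x")
          case True
          then have "y \<in> S" "f y = y" using y ab Sab unfolding f_def by auto
          then show ?thesis by (metis UnI1 image_eqI)
        next
          case False
          show ?thesis
          proof (cases "y \<le> x + n - 1")
            case True then show ?thesis using False by auto
          next
            case False2: False
            define z where "z = y + 1 - n"
            have "z \<in> S" "f z = y" using y ab Sab False2 n unfolding z_def f_def by auto
            then show ?thesis by (metis UnI1 image_eqI)
          qed
        qed
      qed
    qed
    then show ?thesis using True xin unfolding gp_def f_def is_int_interval_def by auto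
  next
    case False
    then have "b < x \<or> x < a" using Sab by auto
    then have "is_int_interval (f ` S)"
    proof
      assume "b < x"
      then have "f ` S = S" unfolding Sab f_def by (auto simp: image_iff)
      then show ?thesis using S by simp
    next
      assume xa: "x < a"
      have "f ` S = (\<lambda>y. y + (n - 1)) ` S" unfolding Sab f_def using xa n
        by (intro image_cong) auto
      then show ?thesis using int_shift[OF S] by simp
    qed
    then show ?thesis using False xin unfolding gp_def f_def by auto
  qed
qed

lemma gap_back:
  assumes g: "gp p {p..q} S" and d: "S \<inter> {p<..q} = {}" and pq: "p \<le> q"
  shows "is_int_interval ((\<lambda>y. if q < y then y - (q - p) else y) ` S)"
proof -
  define g where "g = (\<lambda>y::nat. if q < y then y - (q - p) else y)"
  show ?thesis
  proof (cases "p \<in> S")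
    case True
    then obtain a b where ab: "S \<union> {p..q} = {a..b}" using g unfolding gp_def is_int_interval_def by auto
    have abpq: "a \<le> p" "q \<le> b" using ab pq
      by (metis atLeastAtMost_iff le_sup_iff atLeastatMost_subset_iff sup_ge2 True)+
    have S: "S = {a..b} - {p<..q}" using ab d True by auto
    have "g ` S = {a..b - (q - p)}"
    proof
      show "g ` S \<subseteq> {a..b - (q - p)}" using abpq pq unfolding S g_def by auto
      show "{a..b - (q - p)} \<subseteq> g ` S"
      proof
        fix y assume y: "y \<in> {a..b - (q - p)}"
        show "y \<in> g ` S"
        proof (cases "y \<le> p")
          case True
          then have "y \<in> S" "g y = y" using y abpq pq unfolding S g_def by auto
          then show ?thesis by (metis image_eqI)
        next
          case False
          define z where "z = y + (q - p)"
          have "z \<in> S" "g z = y" using y abpq pq False unfolding z_def S g_def by auto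
          then show ?thesis by (metis image_eqI)
        qed
      qed
    qed
    then show ?thesis unfolding g_def is_int_interval_def by blast
  next
    case False
    then have Si: "is_int_interval S" using g unfolding gp_def by simp
    then obtain a b where Sab: "S = {a..b}" unfolding is_int_interval_def by blast
    have "{p..q} = insert p {p<..q}" using pq by auto
    then have "S \<inter> {p..q} = {}" using d False by auto
    then have "b < p \<or> q < a \<or> b < a" using Sab pq by (cases "a \<le> b") auto
    then show ?thesis
    proof (elim disjE)
      assume "b < p"
      then have "g ` S = S" unfolding Sab g_def using pq by (auto simp: image_iff)
      then show ?thesis using Si unfolding g_def by simp
    next
      assume qa: "q < a"
      have "g ` S = (\<lambda>y. y - (q - p)) ` S" unfolding Sab g_def using qa
        by (intro image_cong) auto
      also have "\<dots> = {a - (q-p) .. b - (q-p)}"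
      proof
        show "(\<lambda>y. y - (q - p)) ` S \<subseteq> {a - (q-p) .. b - (q-p)}" unfolding Sab by auto
        show "{a - (q-p) .. b - (q-p)} \<subseteq> (\<lambda>y. y - (q - p)) ` S"
        proof
          fix y assume y: "y \<in> {a - (q-p) .. b - (q-p)}"
          then have "y + (q - p) \<in> S" "y = y + (q - p) - (q - p)" unfolding Sab using qa pq by auto
          then show "y \<in> (\<lambda>y. y - (q - p)) ` S" by blast
        qed
      qed
      finally show ?thesis unfolding g_def is_int_interval_def by blast
    next
      assume "b < a"
      then have "S = {}" using Sab by simp
      then show ?thesis unfolding is_int_interval_def by (rule_tac x=1 in exI, rule_tac x=0 in exI) simp
    qed
  qed
qed



definition good :: "nat \<Rightarrow> rwt \<Rightarrow> bool" where
  "good n T \<longleftrightarrow> shp T \<and> ivl is_int_interval T \<and> dl T \<and> alllabs T = {1..n}"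

lemma dl_merge:
  assumes e: "labs r + {#x#} = labs a + labs b" and da: "dl a" and db: "dl b"
    and i: "alllabs a \<inter> alllabs b = {x}" and fa: "finite (alllabs a)" and fb: "finite (alllabs b)"
  shows "labs r = mset_set (alllabs a \<union> alllabs b)"
proof -
  have xb: "x \<in> alllabs b" and xa: "x \<in> alllabs a" using i by auto
  have mb: "mset_set (alllabs b) = mset_set (alllabs b - {x}) + {#x#}"
    using mset_set.remove[OF fb xb] by simp
  have "mset_set (alllabs a \<union> (alllabs b - {x})) = mset_set (alllabs a) + mset_set (alllabs b - {x})"
    by (rule mset_set_Union) (use fa fb i in auto)
  moreover have "alllabs a \<union> (alllabs b - {x}) = alllabs a \<union> alllabs b" using xa by auto
  ultimately have u: "mset_set (alllabs a \<union> alllabs b) = mset_set (alllabs a) + mset_set (alllabs b - {x})"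
    by simp
  have "labs r + {#x#} = mset_set (alllabs a) + mset_set (alllabs b - {x}) + {#x#}"
    using e da db mb unfolding dl_def by (simp add: add_ac)
  then show ?thesis using u by simp
qed

lemma comp_sound:
  assumes g1: "good m T1" and g2: "good n T2" and x1: "1 \<le> x" and xm: "x \<le> m"
  shows "good (m + n - 1) (comp T1 x T2 n)"
proof -
  have s1: "shp T1" "ivl is_int_interval T1" "dl T1" "alllabs T1 = {1..m}" using g1 unfolding good_def by auto
  have s2: "shp T2" "ivl is_int_interval T2" "dl T2" "alllabs T2 = {1..n}" using g2 unfolding good_def by auto
  have n1: "1 \<le> n" using alllabs_ne[OF s2(1)] s2(4) by (cases n) auto
  define f where "f = (\<lambda>y::nat. if y > x then y + n - 1 else y)"
  define h where "h = (\<lambda>y::nat. y + x - 1)"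
  define T1' where "T1' = relab f T1"
  define T2' where "T2' = relab h T2"
  define J where "J = {x..x+n-1}"
  have ceq: "comp T1 x T2 n = (if \<not> red T2' then graftW x T2' T1'
         else if T1' = Node {x} {#} then T2' else graftR x T2' T1')"
    unfolding comp_def Let_def T1'_def T2'_def f_def h_def by simp
  have fx: "\<And>y. f y = x \<longleftrightarrow> y = x" unfolding f_def using n1 by auto
  have injf: "inj_on f {1..m}" unfolding inj_on_def f_def using n1 by auto
  have h': "h = (\<lambda>y. y + (x - 1))" unfolding h_def using x1 by auto
  have injh: "inj_on h {1..n}" unfolding inj_on_def h' by auto
  have imf_un: "f ` {1..m} \<union> J = {1..m+n-1}"
  proof
    show "f ` {1..m} \<union> J \<subseteq> {1..m+n-1}" unfolding f_def J_def using x1 xm n1 by auto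
    show "{1..m+n-1} \<subseteq> f ` {1..m} \<union> J"
    proof
      fix y assume y: "y \<in> {1..m+n-1}"
      show "y \<in> f ` {1..m} \<union> J"
      proof (cases "y \<le> x")
        case True
        then have "y \<in> {1..m}" "f y = y" using y xm unfolding f_def by auto
        then show ?thesis by (metis UnI1 image_eqI)
      next
        case False
        show ?thesis
        proof (cases "y \<le> x + n - 1")
          case True then show ?thesis using False unfolding J_def by auto
        next
          case False2: False
          define z where "z = y + 1 - n"
          have "z \<in> {1..m}" "f z = y" using y xm False2 n1 unfolding z_def f_def by auto
          then show ?thesis by (metis UnI1 image_eqI)
        qed
      qed
    qed
  qed
  have imf_int: "f ` {1..m} \<inter> J = {x}"
  proof
    have "f x = x" using fx by simp
    then have "x \<in> f ` {1..m}" using x1 xm by (metis atLeastAtMost_iff image_eqI)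
    moreover have "x \<in> J" unfolding J_def using n1 by simp
    ultimately show "{x} \<subseteq> f ` {1..m} \<inter> J" by simp
    show "f ` {1..m} \<inter> J \<subseteq> {x}"
    proof
      fix y assume "y \<in> f ` {1..m} \<inter> J"
      then obtain z where "z \<in> {1..m}" "y = f z" "x \<le> y" "y \<le> x + n - 1" unfolding J_def by auto
      then show "y \<in> {x}" unfolding f_def by (auto split: if_splits)
    qed
  qed
  have sT1: "shp T1'" unfolding T1'_def by (rule shp_relab[OF s1(1)])
  have aT1: "alllabs T1' = f ` {1..m}" unfolding T1'_def alllabs_relab s1(4) ..
  have dT1: "dl T1'" unfolding T1'_def by (rule dl_relab[OF s1(1,3)]) (use injf s1(4) in simp)
  have iT1: "ivl (gp x J) T1'" unfolding T1'_def J_def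
    by (rule ivl_relab[OF s1(2)]) (use gap_fwd n1 f_def in simp)
  have xT1: "x \<in> alllabs T1'" using imf_int aT1 by auto
  have sT2: "shp T2'" unfolding T2'_def by (rule shp_relab[OF s2(1)])
  have aT2: "alllabs T2' = J"
  proof -
    have "h ` {1..n} = J"
    proof
      show "h ` {1..n} \<subseteq> J" unfolding h' J_def using x1 by auto
      show "J \<subseteq> h ` {1..n}"
      proof
        fix y assume "y \<in> J"
        then have "y - (x - 1) \<in> {1..n}" "y = h (y - (x - 1))" unfolding J_def h' using x1 by auto
        then show "y \<in> h ` {1..n}" by blast
      qed
    qed
    then show ?thesis unfolding T2'_def alllabs_relab s2(4) .
  qed
  have dT2: "dl T2'" unfolding T2'_def by (rule dl_relab[OF s2(1,3)]) (use injh s2(4) in simp)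
  have iT2: "ivl is_int_interval T2'" unfolding T2'_def
    by (rule ivl_relab[OF s2(2)]) (use int_shift h' in simp)
  have inter: "alllabs T1' \<inter> J = {x}" using imf_int aT1 by simp
  have finJ: "finite J" unfolding J_def by simp
  have fin1: "finite (alllabs T1')" using finite_alllabs[OF sT1] .
  show ?thesis
  proof (cases "red T2'")
    case False
    have P: "shp (graftW x T2' T1') \<and> ivl is_int_interval (graftW x T2' T1') \<and> red (graftW x T2' T1') = red T1'
     \<and> alllabs (graftW x T2' T1') = alllabs T1' \<union> J \<and> labs (graftW x T2' T1') + {#x#} = labs T1' + labs T2'"
      by (rule graftW_props[OF sT1 iT1 dT1 xT1 sT2 iT2 False aT2 inter])
    have "labs (graftW x T2' T1') = mset_set (alllabs T1' \<union> alllabs T2')"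
      by (rule dl_merge[OF _ dT1 dT2]) (use P inter aT2 fin1 finJ in auto)
    then show ?thesis unfolding ceq good_def dl_def using False P aT1 aT2 imf_un by simp
  next
    case True
    show ?thesis
    proof (cases "T1' = Node {x} {#}")
      case leaf: True
      have "alllabs T1' = {x}" using leaf by simp
      then have "f ` {1..m} = {x}" using aT1 by simp
      then have "f 1 = x" "f m = x" using xm x1 by auto
      then have "m = 1" "x = 1" using fx by auto
      then have "m + n - 1 = n" "J = {1..n}" unfolding J_def by auto
      then show ?thesis unfolding ceq good_def using True leaf sT2 iT2 dT2 aT2 by simp
    next
      case nleaf: False
      have P: "shp (graftR x T2' T1') \<and> ivl is_int_interval (graftR x T2' T1') \<and> red (graftR x T2' T1') = red T1'
       \<and> alllabs (graftR x T2' T1') = alllabs T1' \<union> J \<and> labs (graftR x T2' T1') + {#x#} = labs T1' + labs T2'"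
        by (rule graftR_props[OF sT1 iT1 dT1 xT1 nleaf sT2 iT2 True aT2 inter])
      have "labs (graftR x T2' T1') = mset_set (alllabs T1' \<union> alllabs T2')"
        by (rule dl_merge[OF _ dT1 dT2]) (use P inter aT2 fin1 finJ in auto)
      then show ?thesis unfolding ceq good_def dl_def using True nleaf P aT1 aT2 imf_un by simp
    qed
  qed
qed



lemma ivl_sub: "ivl P t \<longleftrightarrow> (\<forall>s\<in>subtrees t. P (alllabs s))"
  by (induction t) auto

lemma shp_sub: "shp t \<longleftrightarrow> wf_rw t \<and> (\<forall>s\<in>subtrees t. card (lab s) \<le> 1 \<and>
      (lab s \<noteq> {} \<longrightarrow> (\<forall>c \<in># kids s. \<not> red c)) \<and>
      (white s \<longrightarrow> size (filter_mset red (kids s)) \<le> 1))"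
proof (induction t)
  case (Node L K)
  show ?case
  proof
    assume "shp (Node L K)"
    then show "wf_rw (Node L K) \<and> (\<forall>s\<in>subtrees (Node L K). card (lab s) \<le> 1 \<and>
      (lab s \<noteq> {} \<longrightarrow> (\<forall>c \<in># kids s. \<not> red c)) \<and>
      (white s \<longrightarrow> size (filter_mset red (kids s)) \<le> 1))"
      using Node.IH unfolding white_def by (auto simp del: red.simps)
  next
    assume "wf_rw (Node L K) \<and> (\<forall>s\<in>subtrees (Node L K). card (lab s) \<le> 1 \<and>
      (lab s \<noteq> {} \<longrightarrow> (\<forall>c \<in># kids s. \<not> red c)) \<and>
      (white s \<longrightarrow> size (filter_mset red (kids s)) \<le> 1))"
    then show "shp (Node L K)"
      using Node.IH unfolding white_def by (auto simp del: red.simps)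
  qed
qed

lemma rhs_iff:
  "(RW n T \<and> rec_labelled T \<and>
      (\<forall>s \<in> subtrees T. card (lab s) \<le> 1) \<and>
      (\<forall>s \<in> subtrees T. lab s \<noteq> {} \<longrightarrow> (\<forall>c \<in># kids s. \<not> red c)) \<and>
      (\<forall>s \<in> subtrees T. white s \<longrightarrow> size (filter_mset red (kids s)) \<le> 1)) \<longleftrightarrow> good n T"
proof
  assume a: "RW n T \<and> rec_labelled T \<and>
      (\<forall>s \<in> subtrees T. card (lab s) \<le> 1) \<and>
      (\<forall>s \<in> subtrees T. lab s \<noteq> {} \<longrightarrow> (\<forall>c \<in># kids s. \<not> red c)) \<and>
      (\<forall>s \<in> subtrees T. white s \<longrightarrow> size (filter_mset red (kids s)) \<le> 1)"
  have s: "shp T" using a unfolding shp_sub RW_def by blast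
  have i: "ivl is_int_interval T" using a unfolding ivl_sub rec_labelled_def by blast
  have l: "labs T = mset_set {1..n}" using a unfolding RW_def by blast
  have al: "alllabs T = {1..n}" using set_labs[OF s] l by simp
  show "good n T" unfolding good_def dl_def using s i l al by simp
next
  assume g: "good n T"
  then show "RW n T \<and> rec_labelled T \<and>
      (\<forall>s \<in> subtrees T. card (lab s) \<le> 1) \<and>
      (\<forall>s \<in> subtrees T. lab s \<noteq> {} \<longrightarrow> (\<forall>c \<in># kids s. \<not> red c)) \<and>
      (\<forall>s \<in> subtrees T. white s \<longrightarrow> size (filter_mset red (kids s)) \<le> 1)"
    unfolding good_def dl_def RW_def rec_labelled_def using shp_sub[of T] ivl_sub[of _ T] by simp
qed

lemma int12: "is_int_interval {1,2::nat}"
  unfolding is_int_interval_def by (rule exI[of _ 1], rule exI[of _ 2]) auto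

lemma int1: "is_int_interval {n::nat}"
  unfolding is_int_interval_def by (rule exI[of _ n], rule exI[of _ n]) auto

lemma int12': "is_int_interval {Suc 0,2::nat}" using int12 by simp

lemma set12: "{1..2::nat} = {1,2}" by auto

lemma gens: "good 1 (Node {1} {#})" "good 2 A_succ" "good 2 A_prec" "good 2 A_odot"
  unfolding good_def dl_def A_succ_def A_prec_def A_odot_def
  by (auto simp: int12 int12' int1 set12 insert_commute)

lemma sound: "RWSodot n T \<Longrightarrow> good n T"
proof (induction rule: RWSodot.induct)
  case (compose m T1 n T2 x)
  then show ?case using comp_sound by blast
qed (use gens in auto)



lemma int_shift_down: "is_int_interval S \<Longrightarrow> (\<forall>y\<in>S. k \<le> y) \<Longrightarrow> is_int_interval ((\<lambda>y. y - k) ` S)"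
proof -
  assume S: "is_int_interval S" and k: "\<forall>y\<in>S. k \<le> y"
  then obtain a b where Sab: "S = {a..b}" unfolding is_int_interval_def by blast
  show ?thesis
  proof (cases "a \<le> b")
    case False
    then have "S = {}" using Sab by simp
    then show ?thesis unfolding is_int_interval_def by (rule_tac x=1 in exI, rule_tac x=0 in exI) simp
  next
    case True
    then have ka: "k \<le> a" using k Sab by auto
    have "(\<lambda>y. y - k) ` S = {a - k..b - k}"
    proof
      show "(\<lambda>y. y - k) ` S \<subseteq> {a - k..b - k}" unfolding Sab by auto
      show "{a - k..b - k} \<subseteq> (\<lambda>y. y - k) ` S"
      proof
        fix y assume y: "y \<in> {a - k..b - k}"
        then have "y + k \<in> S" "y = y + k - k" unfolding Sab using ka True by auto
        then show "y \<in> (\<lambda>y. y - k) ` S" by blast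
      qed
    qed
    then show ?thesis unfolding is_int_interval_def by blast
  qed
qed

lemma cut:
  assumes s: "shp t0" and i: "ivl (gp p {p..q}) t0" and d: "dl t0"
    and a: "alllabs t0 = {1..n} - {p<..q}" and pq: "1 \<le> p" "p \<le> q" "q \<le> n"
  shows "good (n - (q - p)) (relab (\<lambda>y. if q < y then y - (q - p) else y) t0)"
    "relab (\<lambda>y. if y > p then y + (q - p + 1) - 1 else y) (relab (\<lambda>y. if q < y then y - (q - p) else y) t0) = t0"
proof -
  define g where "g = (\<lambda>y::nat. if q < y then y - (q - p) else y)"
  have injg: "inj_on g (alllabs t0)" unfolding inj_on_def g_def a by auto
  have img: "g ` ({1..n} - {p<..q}) = {1..n - (q - p)}"
  proof
    show "g ` ({1..n} - {p<..q}) \<subseteq> {1..n - (q - p)}" unfolding g_def using pq by auto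
    show "{1..n - (q - p)} \<subseteq> g ` ({1..n} - {p<..q})"
    proof
      fix y assume y: "y \<in> {1..n - (q - p)}"
      show "y \<in> g ` ({1..n} - {p<..q})"
      proof (cases "y \<le> p")
        case True
        then have "y \<in> {1..n} - {p<..q}" "g y = y" using y pq unfolding g_def by auto
        then show ?thesis by (metis image_eqI)
      next
        case False
        have "y + (q - p) \<in> {1..n} - {p<..q}" "g (y + (q - p)) = y" using y pq False unfolding g_def by auto
        then show ?thesis by (metis image_eqI)
      qed
    qed
  qed
  have "shp (relab g t0)" by (rule shp_relab[OF s])
  moreover have "ivl is_int_interval (relab g t0)"
  proof (rule ivl_relab[OF i])
    fix S assume "gp p {p..q} S" "S \<subseteq> alllabs t0"
    moreover then have "S \<inter> {p<..q} = {}" using a by auto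
    ultimately show "is_int_interval (g ` S)" unfolding g_def using gap_back pq by blast
  qed
  moreover have "dl (relab g t0)" by (rule dl_relab[OF s d injg])
  moreover have "alllabs (relab g t0) = {1..n - (q - p)}" unfolding alllabs_relab a img ..
  ultimately show "good (n - (q - p)) (relab (\<lambda>y. if q < y then y - (q - p) else y) t0)"
    unfolding good_def g_def by simp
  show "relab (\<lambda>y. if y > p then y + (q - p + 1) - 1 else y) (relab (\<lambda>y. if q < y then y - (q - p) else y) t0) = t0"
    unfolding relab_relab by (rule relab_id) (use a pq in auto)
qed

lemma cutc:
  assumes s: "shp c" "ivl is_int_interval c" "dl c" and a: "alllabs c = {p..q}" and p: "1 \<le> p"
  shows "good (q - p + 1) (relab (\<lambda>y. y + 1 - p) c)" "relab (\<lambda>y. y + p - 1) (relab (\<lambda>y. y + 1 - p) c) = c"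
proof -
  have ne: "p \<le> q" using alllabs_ne[OF s(1)] a by auto
  define h where "h = (\<lambda>y::nat. y + 1 - p)"
  have h': "\<And>y. p \<le> y \<Longrightarrow> h y = y - (p - 1)" unfolding h_def using p by auto
  have injh: "inj_on h (alllabs c)" unfolding inj_on_def h_def a by auto
  have imh: "h ` {p..q} = {1..q - p + 1}"
  proof
    show "h ` {p..q} \<subseteq> {1..q - p + 1}" unfolding h_def by auto
    show "{1..q - p + 1} \<subseteq> h ` {p..q}"
    proof
      fix y assume y: "y \<in> {1..q - p + 1}"
      then have "y + p - 1 \<in> {p..q}" "h (y + p - 1) = y" unfolding h_def using p ne by auto
      then show "y \<in> h ` {p..q}" by (metis image_eqI)
    qed
  qed
  have "shp (relab h c)" by (rule shp_relab[OF s(1)])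
  moreover have "ivl is_int_interval (relab h c)"
  proof (rule ivl_relab[OF s(2)])
    fix S assume S: "is_int_interval S" "S \<subseteq> alllabs c"
    then have "h ` S = (\<lambda>y. y - (p - 1)) ` S" using h' a by (intro image_cong) auto
    moreover have "is_int_interval ((\<lambda>y. y - (p - 1)) ` S)"
      by (rule int_shift_down[OF S(1)]) (use S(2) a in force)
    ultimately show "is_int_interval (h ` S)" by simp
  qed
  moreover have "dl (relab h c)" by (rule dl_relab[OF s(1,3) injh])
  moreover have "alllabs (relab h c) = {1..q - p + 1}" unfolding alllabs_relab a imh ..
  ultimately show "good (q - p + 1) (relab (\<lambda>y. y + 1 - p) c)" unfolding good_def h_def by simp
  show "relab (\<lambda>y. y + p - 1) (relab (\<lambda>y. y + 1 - p) c) = c"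
    unfolding relab_relab by (rule relab_id) (use a p in auto)
qed

lemma relab_back_c: "alllabs c = {p..q} \<Longrightarrow> 1 \<le> p \<Longrightarrow> relab (\<lambda>y. y + p - 1) (relab (\<lambda>y. y + 1 - p) c) = c"
  unfolding relab_relab by (rule relab_id) auto

lemma decomp:
  assumes IH: "\<And>m T'. sz T' < sz T \<Longrightarrow> good m T' \<Longrightarrow> RWSodot m T'"
    and t0: "shp t0" "ivl (gp p {p..q}) t0" "labs t0 = mset_set ({1..n} - {p<..q})" "sz t0 < sz T"
    and pq: "1 \<le> p" "p \<le> q" "q \<le> n"
    and c: "alllabs c = {p..q}" "RWSodot (q - p + 1) (relab (\<lambda>y. y + 1 - p) c)"
    and eq: "T = (if \<not> red c then graftW p c t0 else if t0 = Node {p} {#} then c else graftR p c t0)"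
  shows "RWSodot n T"
proof -
  have al: "alllabs t0 = {1..n} - {p<..q}" using set_labs[OF t0(1)] t0(3) by simp
  have dl0: "dl t0" unfolding dl_def using t0(3) al by simp
  define T1 where "T1 = relab (\<lambda>y. if q < y then y - (q - p) else y) t0"
  define T2 where "T2 = relab (\<lambda>y. y + 1 - p) c"
  have g1: "good (n - (q - p)) T1" and b1: "relab (\<lambda>y. if y > p then y + (q - p + 1) - 1 else y) T1 = t0"
    using cut[OF t0(1,2) dl0 al pq] unfolding T1_def by auto
  have r1: "RWSodot (n - (q - p)) T1" by (rule IH[OF _ g1]) (use t0(4) sz_relab T1_def in simp)
  have b2: "relab (\<lambda>y. y + p - 1) T2 = c" unfolding T2_def by (rule relab_back_c[OF c(1) pq(1)])
  have r: "RWSodot (n - (q - p) + (q - p + 1) - 1) (comp T1 p T2 (q - p + 1))"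
    by (rule RWSodot.compose[OF r1 c(2)[folded T2_def] pq(1)]) (use pq in simp)
  have "comp T1 p T2 (q - p + 1) = T"
    unfolding comp_def Let_def b1 b2 eq by simp
  moreover have "n - (q - p) + (q - p + 1) - 1 = n" using pq by simp
  ultimately show ?thesis using r by simp
qed



lemma ms_rem:
  assumes "X + mset_set R = mset_set S" "finite S" "R \<subseteq> S"
  shows "X = mset_set (S - R)"
proof -
  have fR: "finite R" using finite_subset[OF assms(3,2)] .
  have "mset_set ((S - R) \<union> R) = mset_set (S - R) + mset_set R"
    by (rule mset_set_Union) (use assms(2) fR in auto)
  moreover have "(S - R) \<union> R = S" using assms(3) by auto
  ultimately have "mset_set S = mset_set (S - R) + mset_set R" by simp
  then show ?thesis using assms(1) by simp
qed

lemma ms_cut: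
  fixes p q n :: nat
  assumes "X + mset_set {p..q} = mset_set {1..n}" "1 \<le> p" "p \<le> q" "q \<le> n"
  shows "X + {#p#} = mset_set ({1..n} - {p<..q})"
proof -
  have sub: "{p..q} \<subseteq> {1..n}" using assms(2-4) by auto
  have X: "X = mset_set ({1..n} - {p..q})" by (rule ms_rem[OF assms(1) _ sub]) simp
  have "{1..n} - {p<..q} = insert p ({1..n} - {p..q})" using assms by auto
  then have "mset_set ({1..n} - {p<..q}) = add_mset p (mset_set ({1..n} - {p..q}))"
    using assms(2-4) by (simp add: mset_set.insert_remove)
  then show ?thesis using X by simp
qed

lemma sz_pos: "1 \<le> sz t"
  by (induction t) simp

lemma sz_kids: "kids c \<noteq> {#} \<Longrightarrow> 2 \<le> sz c"
proof -
  assume "kids c \<noteq> {#}"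
  then obtain d where d: "d \<in># kids c" by blast
  have "sz d < sz (Node (lab c) (kids c))" by (rule sz_child[OF d])
  then show ?thesis using sz_pos[of d] by simp
qed

lemma ivl_gp_of_int: "ivl is_int_interval d \<Longrightarrow> x \<notin> alllabs d \<Longrightarrow> ivl (gp x J) d"
  by (rule ivl_mono[of is_int_interval]) (auto simp: gp_def)

lemma gp_leaf: "p \<le> q \<Longrightarrow> gp p {p..q} {p}"
proof -
  assume "p \<le> q"
  then have "{p} \<union> {p..q} = {p..q}" by auto
  then show ?thesis unfolding gp_def is_int_interval_def by auto
qed

lemma self_sub: "t \<in> subtrees t"
  by (induction t) auto

lemma child_interval:
  assumes "good n (Node L K)" "c \<in># K"
  obtains p q where "alllabs c = {p..q}" "1 \<le> p" "p \<le> q" "q \<le> n"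
proof -
  have s: "shp c" "ivl is_int_interval c" using assms by (auto simp: good_def)
  have "is_int_interval (alllabs c)" using s(2) ivl_sub[of _ c] self_sub[of c] by blast
  then obtain p q where pq: "alllabs c = {p..q}" unfolding is_int_interval_def by blast
  have "alllabs c \<noteq> {}" by (rule alllabs_ne[OF s(1)])
  then have "p \<le> q" using pq by auto
  moreover have "alllabs c \<subseteq> {1..n}" using assms unfolding good_def by auto
  ultimately show ?thesis using that pq by auto
qed

lemma leaf_shape: "shp c \<Longrightarrow> kids c = {#} \<Longrightarrow> \<exists>b. c = Node {b} {#}"
proof -
  assume s: "shp c" and k: "kids c = {#}"
  have c: "c = Node (lab c) {#}" using rwt.collapse[of c, symmetric] unfolding k .
  then have "shp (Node (lab c) {#})" using s by simp
  then have ne: "lab c \<noteq> {}" and fc: "finite (lab c)" "card (lab c) \<le> 1" by auto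
  from ne obtain b where bl: "b \<in> lab c" by blast
  have "lab c = {b}" using single_lab[OF fc bl] .
  then show ?thesis using c by auto
qed

lemma gp_single: "p \<le> q \<Longrightarrow> gp p {p..q} {b}"
proof (cases "b = p")
  case True
  assume "p \<le> q"
  then show ?thesis using gp_leaf True by simp
next
  case False
  then show ?thesis unfolding gp_def using int1 by simp
qed

lemma size_sum_labs: "(\<And>c. c \<in># K \<Longrightarrow> size (labs c) = 1) \<Longrightarrow> size (sum_mset (image_mset labs K)) = size K"
  by (induction K) auto

lemma red_filter: "red (Node L M) \<longleftrightarrow> L = {} \<and> filter_mset red M = {#}"
  by (auto simp: filter_mset_eq_conv)

lemma complete: "good n T \<Longrightarrow> RWSodot n T"
proof (induction "sz T" arbitrary: n T rule: less_induct)
  case less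
  have IH: "\<And>m T'. sz T' < sz T \<Longrightarrow> good m T' \<Longrightarrow> RWSodot m T'" using less.hyps by blast
  define L where "L = lab T"
  define K where "K = kids T"
  have T: "T = Node L K" unfolding L_def K_def by (rule rwt.collapse[symmetric])
  have gT: "good n (Node L K)" using less.prems T by simp
  have sT: "shp (Node L K)" "ivl is_int_interval (Node L K)" "dl (Node L K)" "alllabs (Node L K) = {1..n}"
    using gT unfolding good_def by auto
  have lT: "labs (Node L K) = mset_set {1..n}" using sT(3,4) unfolding dl_def by simp
  show ?case
  proof (cases "\<exists>c\<in>#K. \<not> red c \<and> kids c \<noteq> {#}")
    case True
    then obtain c where cK: "c \<in># K" and wc: "\<not> red c" and kc: "kids c \<noteq> {#}" by blast
    define K' where "K' = K - {#c#}"
    have K: "K = add_mset c K'" unfolding K'_def using cK by simp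
    have sc: "shp c" "ivl is_int_interval c" "dl c" using sT cK dl_child[OF sT(1,3) cK] by auto
    obtain p q where pq: "alllabs c = {p..q}" "1 \<le> p" "p \<le> q" "q \<le> n"
      using child_interval[OF gT cK] by blast
    have rc: "RWSodot (q - p + 1) (relab (\<lambda>y. y + 1 - p) c)"
      by (rule IH[OF _ cutc(1)[OF sc pq(1,2)]]) (use sz_relab sz_child[OF cK] T in simp)
    define t0 where "t0 = Node L (add_mset (Node {p} {#}) K')"
    have disj: "\<And>d. d \<in># K' \<Longrightarrow> alllabs c \<inter> alllabs d = {}"
      using dl_disj(2)[OF sT(1,3) cK] unfolding K'_def by blast
    have pL: "p \<notin> L" using dl_disj(1)[OF sT(1,3) cK] pq by auto
    have pc: "p \<in> alllabs c" using pq by simp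
    have pK': "\<And>d. d \<in># K' \<Longrightarrow> p \<notin> alllabs d" using disj pc by blast
    have labs0: "labs t0 = mset_set ({1..n} - {p<..q})"
    proof -
      have "(mset_set L + sum_mset (image_mset labs K')) + mset_set {p..q} = mset_set {1..n}"
        using lT sc(3) pq(1) unfolding K dl_def by (simp add: add_ac)
      from ms_cut[OF this pq(2-4)] show ?thesis unfolding t0_def by (simp add: add_ac)
    qed
    have shp0: "shp t0"
    proof -
      have f: "filter_mset red (add_mset (Node {p} {#}) K') = filter_mset red K"
        using wc unfolding K by simp
      have rr: "red t0 = red (Node L K)" unfolding t0_def red_filter f ..
      have sz: "size (add_mset (Node {p} {#}) K') = size K" unfolding K by simp
      have a1: "finite L" "card L \<le> 1" using sT(1) by auto
      have a2: "L = {} \<longrightarrow> 2 \<le> size (add_mset (Node {p} {#}) K')" using sT(1) sz by simp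
      have a3: "L \<noteq> {} \<longrightarrow> (\<forall>d\<in>#add_mset (Node {p} {#}) K'. \<not> red d)" using sT(1) K by auto
      have a4: "\<not> red t0 \<longrightarrow> size (filter_mset red (add_mset (Node {p} {#}) K')) \<le> 1"
        using sT(1) rr unfolding f by simp
      have a5: "\<forall>d\<in>#add_mset (Node {p} {#}) K'. shp d" using sT(1) K by auto
      show ?thesis using a1 a2 a3 a4 a5 unfolding t0_def shp_Node by blast
    qed
    have al0: "alllabs t0 = {1..n} - {p<..q}" using set_labs[OF shp0] labs0 by simp
    have ivl0: "ivl (gp p {p..q}) t0"
    proof -
      have u: "({1..n} - {p<..q}) \<union> {p..q} = {1..n}" using pq by auto
      have "p \<in> {1..n} - {p<..q}" using pq by auto
      then have "gp p {p..q} (alllabs t0)" unfolding gp_def al0 u is_int_interval_def by auto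
      moreover have "ivl (gp p {p..q}) d" if "d \<in># K'" for d
        using ivl_gp_of_int pK'[OF that] sT(2) that K by simp
      moreover have "ivl (gp p {p..q}) (Node {p} {#})" using gp_leaf[OF pq(3)] by simp
      ultimately show ?thesis unfolding t0_def ivl_Node[of _ L] by (simp add: al0[unfolded t0_def])
    qed
    have sz0: "sz t0 < sz T" using sz_kids[OF kc] unfolding T t0_def K by simp
    have eq: "T = graftW p c t0"
    proof -
      have "image_mset (graftW p c) K' = image_mset id K'"
        by (rule image_mset_cong) (use pK' graftW_id in auto)
      then show ?thesis unfolding T t0_def K using pL by simp
    qed
    have eq': "T = (if \<not> red c then graftW p c t0 else if t0 = Node {p} {#} then c else graftR p c t0)"
      using eq wc by simp
    show ?thesis by (rule decomp[OF IH shp0 ivl0 labs0 sz0 pq(2-4) pq(1) rc eq'])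
  next
    case notA: False
    show ?thesis
    proof (cases "\<exists>c\<in>#K. red c")
      case True
      then obtain c where cK: "c \<in># K" and redc: "red c" by blast
      define K' where "K' = K - {#c#}"
      have K: "K = add_mset c K'" unfolding K'_def using cK by simp
      have sc: "shp c" "ivl is_int_interval c" "dl c" using sT cK dl_child[OF sT(1,3) cK] by auto
      have L: "L = {}" using sT(1) cK redc by auto
      have rT: "\<not> red (Node L K)" using cK redc by auto
      have whK': "filter_mset red K' = {#}"
      proof -
        have "size (filter_mset red K) \<le> 1" using sT(1) rT by simp
        then show ?thesis using redc unfolding K by simp
      qed
      have whK'2: "\<And>d. d \<in># K' \<Longrightarrow> \<not> red d" using whK' by (auto simp: filter_mset_eq_conv)
      have K'ne: "K' \<noteq> {#}" using sT(1) L unfolding K by auto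
      have kc: "kids c \<noteq> {#}" using sc(1) redc by (cases c) auto
      obtain p q where pq: "alllabs c = {p..q}" "1 \<le> p" "p \<le> q" "q \<le> n"
        using child_interval[OF gT cK] by blast
      have rc: "RWSodot (q - p + 1) (relab (\<lambda>y. y + 1 - p) c)"
        by (rule IH[OF _ cutc(1)[OF sc pq(1,2)]]) (use sz_relab sz_child[OF cK] T in simp)
      define t0 where "t0 = Node {p} K'"
      have disj: "\<And>d. d \<in># K' \<Longrightarrow> alllabs c \<inter> alllabs d = {}"
        using dl_disj(2)[OF sT(1,3) cK] unfolding K'_def by blast
      have pc: "p \<in> alllabs c" using pq by simp
      have pK': "\<And>d. d \<in># K' \<Longrightarrow> p \<notin> alllabs d" using disj pc by blast
      have labs0: "labs t0 = mset_set ({1..n} - {p<..q})"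
      proof -
        have "(sum_mset (image_mset labs K')) + mset_set {p..q} = mset_set {1..n}"
          using lT sc(3) pq(1) L unfolding K dl_def by (simp add: add_ac)
        from ms_cut[OF this pq(2-4)] show ?thesis unfolding t0_def by (simp add: add_ac)
      qed
      have shp0: "shp t0"
      proof -
        have a3: "\<forall>d\<in>#K'. \<not> red d" using whK'2 by blast
        have a4: "size (filter_mset red K') \<le> 1" by (simp only: whK') simp
        have a5: "\<forall>d\<in>#K'. shp d" using sT(1) K by auto
        show ?thesis using a3 a4 a5 unfolding t0_def shp_Node by simp
      qed
      have al0: "alllabs t0 = {1..n} - {p<..q}" using set_labs[OF shp0] labs0 by simp
      have ivl0: "ivl (gp p {p..q}) t0"
      proof -
        have u: "({1..n} - {p<..q}) \<union> {p..q} = {1..n}" using pq by auto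
        have "p \<in> {1..n} - {p<..q}" using pq by auto
        then have "gp p {p..q} (alllabs t0)" unfolding gp_def al0 u is_int_interval_def by auto
        moreover have "ivl (gp p {p..q}) d" if "d \<in># K'" for d
          using ivl_gp_of_int pK'[OF that] sT(2) that K by simp
        ultimately show ?thesis unfolding t0_def ivl_Node[of _ "{p}"] by (simp add: al0[unfolded t0_def])
      qed
      have sz0: "sz t0 < sz T" using sz_kids[OF kc] unfolding T t0_def K by simp
      have eq': "T = (if \<not> red c then graftW p c t0 else if t0 = Node {p} {#} then c else graftR p c t0)"
        using redc K'ne unfolding T t0_def K L by (simp add: add_ac)
      show ?thesis by (rule decomp[OF IH shp0 ivl0 labs0 sz0 pq(2-4) pq(1) rc eq'])
    next
      case notB: False
      have sK: "\<And>c. c \<in># K \<Longrightarrow> shp c" using sT(1) by simp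
      have leaves: "\<And>c. c \<in># K \<Longrightarrow> \<exists>b. c = Node {b} {#}"
      proof -
        fix c assume c: "c \<in># K"
        have "kids c = {#}" using notA notB c by blast
        then show "\<exists>b. c = Node {b} {#}" using leaf_shape[OF sK[OF c]] by blast
      qed
      have leaf_in: "\<And>y. y \<in> {1..n} \<Longrightarrow> y \<notin> L \<Longrightarrow> Node {y} {#} \<in># K"
      proof -
        fix y assume y: "y \<in> {1..n}" "y \<notin> L"
        then obtain c where c: "c \<in># K" "y \<in> alllabs c" using sT(4) by auto
        obtain b where "c = Node {b} {#}" using leaves[OF c(1)] by blast
        then show "Node {y} {#} \<in># K" using c by simp
      qed
      have iK: "\<And>c. c \<in># K \<Longrightarrow> ivl is_int_interval c" using sT(2) by simp
      show ?thesis
      proof (cases "K = {#}")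
        case True
        then have "L \<noteq> {}" using sT(1) by auto
        then obtain a where aL: "a \<in> L" by blast
        have L: "L = {a}" using single_lab[OF _ _ aL] sT(1) by simp
        have an: "{a} = {1..n}" using sT(4) True L by simp
        then have "a \<in> {1..n}" by blast
        then have i1: "1 \<in> {a}" and i2: "n \<in> {a}" unfolding an by auto
        from i1 i2 have "a = 1" "n = 1" by simp_all
        then show ?thesis using T L True RWSodot.unit by simp
      next
        case Kne: False
        have leafK: "\<And>d. d \<in># K \<Longrightarrow> \<not> red d \<and> shp d \<and> (\<forall>p q. p \<le> q \<longrightarrow> ivl (gp p {p..q}) d)"
        proof -
          fix d assume d: "d \<in># K"
          obtain b where b: "d = Node {b} {#}" using leaves[OF d] by blast
          have "\<forall>p q. p \<le> q \<longrightarrow> ivl (gp p {p..q}) d" unfolding b using gp_single by simp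
          then show "\<not> red d \<and> shp d \<and> (\<forall>p q. p \<le> q \<longrightarrow> ivl (gp p {p..q}) d)"
            using sK[OF d] b by simp
        qed
        show ?thesis
        proof (cases "L = {}")
          case False
          then obtain a where aL: "a \<in> L" by blast
          have L: "L = {a}" using single_lab[OF _ _ aL] sT(1) by simp
          have a1n: "a \<in> {1..n}" using sT(4) L by auto
          have gen: "\<And>p eb. {a, eb} = {p, p+1} \<Longrightarrow> a \<noteq> eb \<Longrightarrow> 1 \<le> p \<Longrightarrow> p + 1 \<le> n
              \<Longrightarrow> Node {eb} {#} \<in># K \<Longrightarrow> RWSodot 2 (relab (\<lambda>y. y + 1 - p) (Node {a} {#Node {eb} {#}#}))
              \<Longrightarrow> RWSodot n T"
          proof -
            fix p eb assume ab: "{a, eb} = {p, p+1}" and aeb: "a \<noteq> eb" and p1: "1 \<le> p" and pn: "p + 1 \<le> n"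
              and eK: "Node {eb} {#} \<in># K" and r2: "RWSodot 2 (relab (\<lambda>y. y + 1 - p) (Node {a} {#Node {eb} {#}#}))"
            define e where "e = Node {eb} {#}"
            define K' where "K' = K - {#e#}"
            have K: "K = add_mset e K'" unfolding K'_def e_def using eK by simp
            define c where "c = Node {a} {#e#}"
            have pq: "1 \<le> p" "p \<le> p + 1" "p + 1 \<le> n" using p1 pn by auto
            have ac: "alllabs c = {p..p+1}"
            proof -
              have "{p..p+1} = {p, p+1}" by auto
              then show ?thesis unfolding c_def e_def using ab by auto
            qed
            have two: "p + 1 - p + 1 = (2::nat)" by simp
            have rc: "RWSodot (p + 1 - p + 1) (relab (\<lambda>y. y + 1 - p) c)" using r2 unfolding two c_def e_def .
            define t0 where "t0 = Node {p} K'"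
            have labs0: "labs t0 = mset_set ({1..n} - {p<..p+1})"
            proof -
              have m2: "mset_set {p..p+1} = {#a, eb#}"
              proof -
                have "{p..p+1} = {p, p+1}" by auto
                then have "{p..p+1} = {a, eb}" using ab by simp
                then show ?thesis using aeb by simp
              qed
              have "(sum_mset (image_mset labs K')) + mset_set {p..p+1} = mset_set {1..n}"
                using lT L unfolding K m2 e_def by (simp add: add_ac add_mset_commute)
              from ms_cut[OF this pq] show ?thesis unfolding t0_def by (simp add: add_ac)
            qed
            have shp0: "shp t0"
            proof -
              have a3: "\<forall>d\<in>#K'. \<not> red d"
              proof
                fix d assume "d \<in># K'"
                then have "d \<in># K" using K by simp
                then show "\<not> red d" using leafK by blast
              qed
              have f: "filter_mset red K' = {#}" using a3 by (simp add: filter_mset_eq_conv)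
              have a4: "size (filter_mset red K') \<le> 1" by (simp only: f) simp
              have a5: "\<forall>d\<in>#K'. shp d"
              proof
                fix d assume "d \<in># K'"
                then have "d \<in># K" using K by simp
                then show "shp d" using leafK by blast
              qed
              show ?thesis using a3 a4 a5 unfolding t0_def shp_Node by simp
            qed
            have al0: "alllabs t0 = {1..n} - {p<..p+1}" using set_labs[OF shp0] labs0 by simp
            have ivl0: "ivl (gp p {p..p+1}) t0"
            proof -
              have u: "({1..n} - {p<..p+1}) \<union> {p..p+1} = {1..n}" using pq by auto
              have "p \<in> {1..n} - {p<..p+1}" using pq by auto
              then have "gp p {p..p+1} (alllabs t0)" unfolding gp_def al0 u is_int_interval_def by auto
              moreover have "ivl (gp p {p..p+1}) d" if "d \<in># K'" for d
              proof -
                have "d \<in># K" using K that by simp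
                then show ?thesis using leafK by simp
              qed
              ultimately show ?thesis unfolding t0_def ivl_Node[of _ "{p}"] by (simp add: al0[unfolded t0_def])
            qed
            have sz0: "sz t0 < sz T" unfolding T t0_def K using sz_pos[of e] by simp
            have nrc: "\<not> red c" unfolding c_def by simp
            have eq': "T = (if \<not> red c then graftW p c t0 else if t0 = Node {p} {#} then c else graftR p c t0)"
              using nrc unfolding T t0_def K L c_def by (simp add: add_ac)
            show "RWSodot n T" by (rule decomp[OF IH shp0 ivl0 labs0 sz0 pq ac rc eq'])
          qed
          show ?thesis
          proof (cases "a < n")
            case True
            have i1: "a + 1 \<in> {1..n}" using True a1n by auto
            have i2: "a + 1 \<notin> L" using L by simp
            have eK: "Node {a+1} {#} \<in># K" using leaf_in[OF i1 i2] .
            have "relab (\<lambda>y. y + 1 - a) (Node {a} {#Node {a+1} {#}#}) = A_prec"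
              unfolding A_prec_def using a1n by simp
            then have r: "RWSodot 2 (relab (\<lambda>y. y + 1 - a) (Node {a} {#Node {a+1} {#}#}))"
              using RWSodot.gen_prec by simp
            have f1: "{a, a+1} = {a, a+1}" ..
            have f2: "a \<noteq> a + 1" by simp
            have f3: "1 \<le> a" using a1n by simp
            have f4: "a + 1 \<le> n" using True by simp
            show ?thesis by (rule gen[OF f1 f2 f3 f4 eK r])
          next
            case False
            then have an: "a = n" using a1n by auto
            obtain d where dK: "d \<in># K" using Kne by blast
            obtain b where b: "d = Node {b} {#}" using leaves[OF dK] by blast
            have "b \<in> alllabs d" using b by simp
            then have "b \<in> alllabs (Node L K)" using dK by auto
            then have "b \<in> {1..n}" unfolding sT(4) .
            moreover have "b \<noteq> a" using dl_disj(1)[OF sT(1,3) dK] b L by auto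
            ultimately have a2: "2 \<le> a" using an by auto
            have i1: "a - 1 \<in> {1..n}" using a2 an by auto
            have i2: "a - 1 \<notin> L" using L a2 by simp
            have eK: "Node {a-1} {#} \<in># K" using leaf_in[OF i1 i2] .
            have "RWSodot 2 (relab (\<lambda>y. y + 1 - (a - 1)) (Node {a} {#Node {a-1} {#}#}))"
            proof -
              have "relab (\<lambda>y. y + 1 - (a - 1)) (Node {a} {#Node {a-1} {#}#}) = A_succ"
                unfolding A_succ_def using a2 by simp
              then show ?thesis using RWSodot.gen_succ by simp
            qed
            moreover have f1: "{a, a - 1} = {a - 1, a - 1 + 1}" using a2 by auto
            moreover have f2: "a \<noteq> a - 1" using a2 by simp
            moreover have f3: "1 \<le> a - 1" using a2 by simp
            moreover have f4: "a - 1 + 1 \<le> n" using a2 an by simp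
            ultimately show ?thesis using gen[OF f1 f2 f3 f4 eK] by blast
          qed
        next
          case L: True
          have szK: "2 \<le> size K" using sT(1) L by simp
          have sizeK: "size K = n"
          proof -
            have "size (sum_mset (image_mset labs K)) = size K"
            proof (rule size_sum_labs)
              fix c assume "c \<in># K"
              then obtain b where "c = Node {b} {#}" using leaves by blast
              then show "size (labs c) = 1" by simp
            qed
            moreover have "sum_mset (image_mset labs K) = mset_set {1..n}" using lT L by simp
            ultimately show ?thesis by simp
          qed
          have lin: "\<And>y. y \<in> {1..n} \<Longrightarrow> Node {y} {#} \<in># K" using leaf_in L by simp
          show ?thesis
          proof (cases "n = 2")
            case True
            have l1: "Node {1} {#} \<in># K" using lin True by simp
            define K1 where "K1 = K - {#Node {1} {#}#}"
            have K1: "K = add_mset (Node {1} {#}) K1" using l1 unfolding K1_def by simp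
            have l2: "Node {2} {#} \<in># K1" using lin[of 2] True K1 by auto
            define K2 where "K2 = K1 - {#Node {2} {#}#}"
            have K2: "K1 = add_mset (Node {2} {#}) K2" using l2 unfolding K2_def by simp
            have "size K2 = 0" using sizeK True K1 K2 by simp
            then have "K = {#Node {1} {#}, Node {2} {#}#}" using K1 K2 by simp
            then have "T = A_odot" unfolding T L A_odot_def by simp
            then show ?thesis using True RWSodot.gen_odot by simp
          next
            case False
            then have n3: "3 \<le> n" using szK sizeK by simp
            define en where "en = Node {n} {#}"
            define e1 where "e1 = Node {n-1} {#}"
            have enK: "en \<in># K" using lin[of n] n3 unfolding en_def by simp
            have e1K: "e1 \<in># K" using lin[of "n-1"] n3 unfolding e1_def by simp
            have ne: "e1 \<noteq> en" unfolding e1_def en_def using n3 by simp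
            define K'' where "K'' = K - {#en#} - {#e1#}"
            have K: "K = add_mset en (add_mset e1 K'')"
            proof -
              have "e1 \<in># add_mset en (K - {#en#})" using e1K insert_DiffM[OF enK] by simp
              then have "e1 \<in># K - {#en#}" using ne by simp
              then show ?thesis using enK unfolding K''_def by (metis insert_DiffM)
            qed
            define c where "c = Node {} {#e1, en#}"
            define t0 where "t0 = Node {} (add_mset e1 K'')"
            have pq: "1 \<le> n - 1" "n - 1 \<le> n" "n \<le> n" using n3 by auto
            have ac: "alllabs c = {n-1..n}"
            proof -
              have "{n-1..n} = {n-1, n}" using n3 by auto
              then show ?thesis unfolding c_def e1_def en_def by auto
            qed
            have rc: "RWSodot (n - (n - 1) + 1) (relab (\<lambda>y. y + 1 - (n - 1)) c)"
            proof -
              have "relab (\<lambda>y. y + 1 - (n - 1)) c = A_odot"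
                unfolding c_def e1_def en_def A_odot_def using n3 by simp
              moreover have "n - (n - 1) + 1 = (2::nat)" using n3 by simp
              ultimately show ?thesis using RWSodot.gen_odot by (simp only:)
            qed
            have labs0: "labs t0 = mset_set ({1..n} - {n-1<..n})"
            proof -
              have m2: "mset_set {n-1..n} = {#n-1, n#}"
              proof -
                have "{n-1..n} = {n-1, n}" using n3 by auto
                then show ?thesis using n3 by simp
              qed
              have "(sum_mset (image_mset labs K'')) + mset_set {n-1..n} = mset_set {1..n}"
                using lT L unfolding K m2 e1_def en_def by (simp add: add_ac add_mset_commute)
              from ms_cut[OF this pq] show ?thesis unfolding t0_def e1_def by (simp add: add_ac)
            qed
            have K''K: "\<And>d. d \<in># K'' \<Longrightarrow> d \<in># K" using K by simp
            have shp0: "shp t0"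
            proof -
              have a3: "\<forall>d\<in>#add_mset e1 K''. \<not> red d"
              proof
                fix d assume "d \<in># add_mset e1 K''"
                then have "d \<in># K" using K by auto
                then show "\<not> red d" using leafK by blast
              qed
              have f: "filter_mset red (add_mset e1 K'') = {#}" using a3 by (simp add: filter_mset_eq_conv)
              have a4: "size (filter_mset red (add_mset e1 K'')) \<le> 1" by (simp only: f) simp
              have a5: "\<forall>d\<in>#add_mset e1 K''. shp d"
              proof
                fix d assume "d \<in># add_mset e1 K''"
                then have "d \<in># K" using K by auto
                then show "shp d" using leafK by blast
              qed
              have a2: "2 \<le> size (add_mset e1 K'')" using sizeK n3 K by simp
              show ?thesis using a2 a3 a4 a5 unfolding t0_def shp_Node by simp
            qed
            have al0: "alllabs t0 = {1..n} - {n-1<..n}" using set_labs[OF shp0] labs0 by simp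
            have ivl0: "ivl (gp (n-1) {n-1..n}) t0"
            proof -
              have u: "({1..n} - {n-1<..n}) \<union> {n-1..n} = {1..n}" using pq by auto
              have "n - 1 \<in> {1..n} - {n-1<..n}" using pq by auto
              then have "gp (n-1) {n-1..n} (alllabs t0)" unfolding gp_def al0 u is_int_interval_def by auto
              moreover have "ivl (gp (n-1) {n-1..n}) d" if "d \<in># add_mset e1 K''" for d
              proof -
                have "d \<in># K" using K that by auto
                then show ?thesis using leafK pq(2) by simp
              qed
              ultimately show ?thesis unfolding t0_def ivl_Node[of _ "{}"] by (simp add: al0[unfolded t0_def])
            qed
            have sz0: "sz t0 < sz T" unfolding T t0_def K using sz_pos[of en] by simp
            have redc: "red c" unfolding c_def e1_def en_def by simp
            have nl: "t0 \<noteq> Node {n-1} {#}" unfolding t0_def by simp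
            have noK'': "\<And>d. d \<in># K'' \<Longrightarrow> n - 1 \<notin> alllabs d"
            proof -
              fix d assume d: "d \<in># K''"
              have "d \<in># K - {#e1#}" using K d by simp
              then have "alllabs e1 \<inter> alllabs d = {}" using dl_disj(2)[OF sT(1,3) e1K] by blast
              then show "n - 1 \<notin> alllabs d" unfolding e1_def by auto
            qed
            define h where "h = (\<lambda>d. if d = Node {n-1} {#} then kids c else {#graftR (n-1) c d#})"
            have hK: "sum_mset (image_mset h K'') = K''"
            proof -
              have "image_mset h K'' = image_mset (\<lambda>d. {#id d#}) K''"
              proof (rule image_mset_cong)
                fix d assume d: "d \<in># K''"
                have nx: "n - 1 \<notin> alllabs d" using noK''[OF d] .
                then have "d \<noteq> Node {n-1} {#}" by auto
                then show "h d = {#id d#}" using graftR_id[OF nx] unfolding h_def by simp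
              qed
              then show ?thesis by (simp add: sum_single)
            qed
            have gr: "graftR (n-1) c t0 = T"
            proof -
              have "graftR (n-1) c t0 = Node {} (sum_mset (image_mset h (add_mset e1 K'')))"
                unfolding t0_def graftR.simps h_def by (simp only: empty_iff if_False)
              also have "\<dots> = Node {} (kids c + K'')" using hK unfolding h_def e1_def by simp
              also have "\<dots> = T" unfolding T L K c_def by (simp add: add_mset_commute)
              finally show ?thesis .
            qed
            have eq': "T = (if \<not> red c then graftW (n-1) c t0 else if t0 = Node {n-1} {#} then c else graftR (n-1) c t0)"
              using redc nl gr by simp
            show ?thesis by (rule decomp[OF IH shp0 ivl0 labs0 sz0 pq ac rc eq'])
          qed
        qed
      qed
    qed
  qed
qed


theorem mainTheorem12:
  "RWSodot n T \<longleftrightarrow>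
     (RW n T \<and> rec_labelled T \<and>
      (\<forall>s \<in> subtrees T. card (lab s) \<le> 1) \<and>
      (\<forall>s \<in> subtrees T. lab s \<noteq> {} \<longrightarrow> (\<forall>c \<in># kids s. \<not> red c)) \<and>
      (\<forall>s \<in> subtrees T. white s \<longrightarrow> size (filter_mset red (kids s)) \<le> 1))"
  unfolding rhs_iff using sound complete by blast

end
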